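(* Consider the controlled network SIS system $\dot x=(-D-H(x)+B-XB)x$, with $B$ irreducible, where $H(x)=\operatorname{diag}(h_1(x_1),\dots,h_n(x_n))$ and each $h_i:[0,1]\to\mathbb{R}_{\ge0}$ is bounded, smooth, monotonically nondecreasing, with $h_i(0)=0$. Suppose $s(-D+B)\le 0$. Then $0_n$ is the unique equilibrium of the system in $\Xi_n$, and $\lim_{t\to\infty}x(t)=0_n$ for all $x(0)\in\Xi_n$.
   Context: $n\ge2$, $D=\operatorname{diag}(d_1,\dots,d_n)$ with $d_i>0$, $B=(b_{ij})\in\mathbb{R}^{n\times n}$ entrywise nonnegative, $X=\operatorname{diag}(x_1,\dots,x_n)$; componentwise $\dot x_i=-(d_i+h_i(x_i))x_i+(1-x_i)\sum_j b_{ij}x_j$. $B$ irreducible is equivalent to the associated directed graph being strongly connected. $\Xi_n=[0,1]^n$; trajectories starting in $\Xi_n$ remain in $\Xi_n$. $s(M)$ denotes the largest real part of the eigenvalues of a square matrix $M$. *)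

theory Defs
  imports "HOL-Analysis.Analysis"
begin

definition smooth_on :: "real set \<Rightarrow> (real \<Rightarrow> real) \<Rightarrow> bool" where
  "smooth_on S f \<longleftrightarrow> (\<exists>F::nat \<Rightarrow> real \<Rightarrow> real. (\<forall>x\<in>S. F 0 x = f x) \<and>
     (\<forall>k. \<forall>x\<in>S. (F k has_real_derivative F (Suc k) x) (at x within S)))"

definition diag_mat :: "real ^ 'n \<Rightarrow> real ^ 'n ^ 'n" where
  "diag_mat d = (\<chi> i j. if i = j then d $ i else 0)"

definition eigenvalues_c :: "real ^ 'n ^ 'n \<Rightarrow> complex set" where
  "eigenvalues_c M = {l. det (mat l - (\<chi> i j. complex_of_real (M $ i $ j))) = 0}"

definition spectral_abscissa :: "real ^ 'n ^ 'n \<Rightarrow> real" where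
  "spectral_abscissa M = Max (Re ` eigenvalues_c M)"

definition irreducible_mat :: "real ^ 'n ^ 'n \<Rightarrow> bool" where
  "irreducible_mat B \<longleftrightarrow> (\<forall>i j. (i, j) \<in> {(i, j). B $ i $ j \<noteq> 0}\<^sup>+)"

definition Xi :: "(real ^ 'n) set" where
  "Xi = {x. \<forall>i. 0 \<le> x $ i \<and> x $ i \<le> 1}"

definition sis_field :: "real ^ 'n \<Rightarrow> ('n \<Rightarrow> real \<Rightarrow> real) \<Rightarrow> real ^ 'n ^ 'n \<Rightarrow> real ^ 'n \<Rightarrow> real ^ 'n" where
  "sis_field d h B x = (\<chi> i. - (d $ i + h i (x $ i)) * x $ i + (1 - x $ i) * (\<Sum>j\<in>UNIV. B $ i $ j * x $ j))"

end

theory Submission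
  imports Defs "HOL-Computational_Algebra.Polynomial"
begin


lemma det_of_real:
  fixes A :: "real^'n^'n"
  shows "det (\<chi> i j. (of_real (A$i$j) :: 'a::{real_algebra_1,comm_ring_1})) = of_real (det A)"
  unfolding det_def by (simp add: of_real_sum of_real_mult)

lemma det_poly:
  fixes P :: "'a::comm_ring_1 poly^'n^'n"
  shows "poly (det P) x = det (\<chi> i j. poly (P$i$j) x)"
  unfolding det_def by (simp add: poly_sum poly_prod)

lemma det_zero_kernel:
  fixes A :: "'a::field^'n^'n"
  assumes "det A = 0"
  shows "\<exists>x. x \<noteq> 0 \<and> A *v x = 0"
proof -
  have "\<not> inj ((*v) A)"
    using det_nz_iff_inj_gen[of "(*v) A"] assms by simp
  then obtain x y where "x \<noteq> y" "A *v x = A *v y" unfolding inj_def by blast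
  then show ?thesis
    by (intro exI[of _ "x - y"]) (simp add: matrix_vector_mult_diff_distrib)
qed

lemma kernel_det_zero:
  fixes A :: "'a::field^'n^'n"
  assumes "x \<noteq> 0" "A *v x = 0"
  shows "det A = 0"
proof (rule ccontr)
  assume "det A \<noteq> 0"
  then have "inj ((*v) A)"
    using det_nz_iff_inj_gen[of "(*v) A"] by simp
  moreover have "A *v 0 = 0" by simp
  ultimately show False using assms unfolding inj_def by metis
qed



lemma eig_bound:
  fixes A :: "complex^'n^'n"
  assumes "det (mat l - A) = 0"
  shows "norm l \<le> (\<Sum>i\<in>UNIV. \<Sum>j\<in>UNIV. norm (A$i$j))"
proof -
  obtain x where x: "x \<noteq> 0" "(mat l - A) *v x = 0" using det_zero_kernel[OF assms] by blast
  define m where "m = Max (range (\<lambda>j. norm (x$j)))"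
  have "m \<in> range (\<lambda>j. norm (x$j))" unfolding m_def by (rule Max_in) auto
  then obtain i where i: "m = norm (x$i)" by auto
  have mj: "norm (x$j) \<le> m" for j unfolding m_def by (rule Max_ge) auto
  have "m > 0"
  proof -
    obtain j where "x$j \<noteq> 0" using x(1) by (metis vec_eq_iff zero_index)
    then show ?thesis using mj[of j] by (meson zero_less_norm_iff order_less_le_trans) 
  qed
  have eq: "l * x$i = (\<Sum>j\<in>UNIV. A$i$j * x$j)"
  proof -
    have "((mat l - A) *v x) $ i = 0" using x(2) by simp
    then have "(\<Sum>j\<in>UNIV. (mat l - A)$i$j * x$j) = 0" by (simp add: matrix_vector_mult_def)
    moreover have "(\<Sum>j\<in>UNIV. (mat l - A)$i$j * x$j) = l * x$i - (\<Sum>j\<in>UNIV. A$i$j * x$j)"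
      by (simp add: mat_def left_diff_distrib sum_subtractf if_distrib[of "\<lambda>z. z * _"] sum.If_cases)
    ultimately show ?thesis by simp
  qed
  have "norm l * m = norm (\<Sum>j\<in>UNIV. A$i$j * x$j)" using i by (simp add: norm_mult flip: eq)
  also have "\<dots> \<le> (\<Sum>j\<in>UNIV. norm (A$i$j) * m)"
    by (rule order_trans[OF norm_sum sum_mono]) (simp add: norm_mult mult_left_mono mj)
  also have "\<dots> = (\<Sum>j\<in>UNIV. norm (A$i$j)) * m" by (simp add: sum_distrib_right)
  finally have "norm l \<le> (\<Sum>j\<in>UNIV. norm (A$i$j))" using \<open>m>0\<close> by simp
  also have "\<dots> \<le> (\<Sum>i\<in>UNIV. \<Sum>j\<in>UNIV. norm (A$i$j))"
    by (rule member_le_sum) (auto intro: sum_nonneg)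
  finally show ?thesis .
qed

lemma eig_finite:
  fixes A :: "complex^'n^'n"
  shows "finite {l. det (mat l - A) = 0}"
proof -
  define P :: "complex poly^'n^'n" where "P = (\<chi> i j. [: - A$i$j, if i = j then 1 else 0 :])"
  have ev: "poly (det P) l = det (mat l - A)" for l
    unfolding det_poly P_def by (rule arg_cong[where f=det]) (simp add: vec_eq_iff mat_def)
  define b where "b = (\<Sum>i\<in>UNIV. \<Sum>j\<in>UNIV. norm (A$i$j))"
  have "det (mat (of_real (b+1)) - A) \<noteq> 0"
  proof
    assume "det (mat (of_real (b+1)) - A) = 0"
    from eig_bound[OF this] have "norm (complex_of_real (b+1)) \<le> b" by (simp add: b_def)
    moreover have "b \<ge> 0" unfolding b_def by (auto intro!: sum_nonneg)
    ultimately show False by simp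
  qed
  then have "det P \<noteq> 0" using ev by (metis poly_0)
  from poly_roots_finite[OF this] show ?thesis by (simp add: ev)
qed



lemma cont_Min:
  fixes f :: "'k \<Rightarrow> real \<Rightarrow> real"
  assumes "finite K" "K \<noteq> {}" "\<And>k. k \<in> K \<Longrightarrow> continuous_on S (f k)"
  shows "continuous_on S (\<lambda>x. Min ((\<lambda>k. f k x) ` K))"
  using assms
proof (induction K rule: finite_ne_induct)
  case (singleton k) then show ?case by simp
next
  case (insert k K)
  have "continuous_on S (\<lambda>x. min (f k x) (Min ((\<lambda>k. f k x) ` K)))"
    using insert by (intro continuous_on_min) auto
  moreover have "Min ((\<lambda>k. f k x) ` insert k K) = min (f k x) (Min ((\<lambda>k. f k x) ` K))" for x
    using insert by (simp add: Min_insert)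
  ultimately show ?case by simp
qed

lemma noeig:
  fixes M :: "real^'n^'n"
  assumes s: "spectral_abscissa M \<le> 0" and l: "l > 0"
  shows "det (mat l - M) \<noteq> 0"
proof
  assume h: "det (mat l - M) = 0"
  have "mat (complex_of_real l) - (\<chi> i j. complex_of_real (M$i$j)) = (\<chi> i j. complex_of_real ((mat l - M)$i$j))"
    by (simp add: vec_eq_iff mat_def)
  then have "det (mat (complex_of_real l) - (\<chi> i j. complex_of_real (M$i$j))) = 0"
    using h det_of_real[of "mat l - M"] by simp
  then have "complex_of_real l \<in> eigenvalues_c M" unfolding eigenvalues_c_def by simp
  moreover have "finite (eigenvalues_c M)" unfolding eigenvalues_c_def by (rule eig_finite)
  ultimately have "Re (complex_of_real l) \<le> spectral_abscissa M"
    unfolding spectral_abscissa_def by (intro Max_ge) (auto intro: rev_image_eqI)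
  then show False using s l by simp
qed

lemma nonsing:
  fixes M :: "real^'n^'n"
  assumes s: "spectral_abscissa M \<le> 0" and mu: "\<mu> \<ge> 0"
  shows "det (mat 1 - \<mu> *\<^sub>R M) \<noteq> 0"
proof (cases "\<mu> = 0")
  case True then show ?thesis by simp
next
  case False
  then have mu: "\<mu> > 0" using mu by simp
  show ?thesis
  proof
    assume "det (mat 1 - \<mu> *\<^sub>R M) = 0"
    then obtain x where x: "x \<noteq> 0" "(mat 1 - \<mu> *\<^sub>R M) *v x = 0" using det_zero_kernel by blast
    have "(mat (1/\<mu>) - M) *v x = (1/\<mu>) *\<^sub>R ((mat 1 - \<mu> *\<^sub>R M) *v x)"
      using mu by (auto simp add: algebra_simps scaleR_matrix_vector_assoc vec_eq_iff matrix_vector_mult_def mat_def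
          sum_distrib_left intro!: sum.cong)
    then have "(mat (1/\<mu>) - M) *v x = 0" using x by simp
    from kernel_det_zero[OF x(1) this] noeig[OF s, of "1/\<mu>"] mu show False by simp
  qed
qed



lemma pos_w:
  fixes M :: "real^'n^'n"
  assumes s: "spectral_abscissa M \<le> 0" and metz: "\<And>i j. i \<noteq> j \<Longrightarrow> M$i$j \<ge> 0"
    and mu: "\<mu> \<ge> 0"
  shows "\<exists>w::real^'n. (\<forall>k. w$k > 0) \<and> (\<forall>k. w$k - \<mu> * (\<Sum>i\<in>UNIV. M$i$k * w$i) = 1)"
proof -
  define C where "C = (\<lambda>\<mu>. transpose (mat 1 - \<mu> *\<^sub>R M))"
  define w where "w = (\<lambda>\<mu>. (\<chi> k. det(\<chi> i j. if j=k then 1 else C \<mu>$i$j) / det (C \<mu>)) :: real^'n)"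
  have dC: "det (C \<mu>) \<noteq> 0" if "\<mu> \<ge> 0" for \<mu>
    using nonsing[OF s that] unfolding C_def by simp
  have E: "w \<mu> $ k - \<mu> * (\<Sum>i\<in>UNIV. M$i$k * w \<mu> $ i) = 1" if "\<mu> \<ge> 0" for \<mu> k
  proof -
    have "C \<mu> *v w \<mu> = (\<chi> i. 1)"
    proof -
      have "w \<mu> = (\<chi> k. det(\<chi> i j. if j=k then (\<chi> i. (1::real))$i else C \<mu>$i$j) / det (C \<mu>))"
        unfolding w_def by (simp only: vec_lambda_beta)
      then show ?thesis using cramer[OF dC[OF that], of "w \<mu>" "\<chi> i. 1"] by blast
    qed
    then have "(C \<mu> *v w \<mu>) $ k = 1" by simp
    then show ?thesis
      by (simp add: C_def matrix_vector_mult_def transpose_def mat_def algebra_simps sum_subtractf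
          if_distrib[of "\<lambda>z. z * _"] if_distrib[of "\<lambda>z. _ * z"] sum.If_cases sum_distrib_left)
  qed
  have w0: "w 0 $ k = 1" for k using E[of 0 k] by simp
  have cont: "continuous_on {0..} (\<lambda>\<mu>. w \<mu> $ k)" for k
  proof -
    define pd :: "real poly" where "pd = det (\<chi> i j. [: (if j = i then 1 else 0), - M$j$i :])"
    define pn :: "real poly" where "pn = det (\<chi> i j. if j = k then 1 else [: (if j = i then 1 else 0), - M$j$i :])"
    have "w \<mu> $ k = poly pn \<mu> / poly pd \<mu>" for \<mu>
      unfolding w_def pn_def pd_def det_poly
      by (simp add: C_def transpose_def mat_def if_distrib[of "\<lambda>p. poly p \<mu>"] cong: if_cong)
    moreover have "continuous_on {0..} (\<lambda>\<mu>. poly pn \<mu> / poly pd \<mu>)"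
    proof -
      have "poly pd \<mu> \<noteq> 0" if "\<mu> \<in> {0..}" for \<mu>
      proof -
        have "poly pd \<mu> = det (C \<mu>)" unfolding pd_def det_poly
          by (simp add: C_def transpose_def mat_def cong: if_cong)
        then show ?thesis using dC that by simp
      qed
      then show ?thesis by (intro continuous_intros) (auto simp del: atLeast_iff)
    qed
    ultimately show ?thesis by simp
  qed
  define m where "m = (\<lambda>\<mu>. Min ((\<lambda>k. w \<mu> $ k) ` UNIV))"
  have mcont: "continuous_on {0..} m" unfolding m_def by (rule cont_Min) (auto intro: cont)
  have pos: "w \<mu> $ k > 0" if mu0: "\<mu> \<ge> 0" for \<mu> k
  proof (rule ccontr)
    assume "\<not> w \<mu> $ k > 0"
    moreover have "m \<mu> \<le> w \<mu> $ k" unfolding m_def by (rule Min_le) auto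
    ultimately have "m \<mu> \<le> 0" by simp
    moreover have "m 0 = 1" unfolding m_def using w0 by simp
    moreover have "continuous_on {0..\<mu>} m" using mcont by (rule continuous_on_subset) auto
    ultimately obtain \<mu>s where ms: "0 \<le> \<mu>s" "\<mu>s \<le> \<mu>" "m \<mu>s = 0"
      using IVT2'[of m \<mu> 0 0] mu0 by auto
    have ge: "w \<mu>s $ i \<ge> 0" for i
    proof -
      have "m \<mu>s \<le> w \<mu>s $ i" unfolding m_def by (rule Min_le) auto
      then show ?thesis using ms(3) by simp
    qed
    have "m \<mu>s \<in> (\<lambda>k. w \<mu>s $ k) ` UNIV" unfolding m_def by (rule Min_in) auto
    then obtain j where j: "w \<mu>s $ j = 0" using ms(3) by auto
    have "(\<Sum>i\<in>UNIV. M$i$j * w \<mu>s $ i) \<ge> 0"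
      by (rule sum_nonneg) (metis j ge metz mult_nonneg_nonneg mult_zero_right order_refl)
    then have "\<mu>s * (\<Sum>i\<in>UNIV. M$i$j * w \<mu>s $ i) \<ge> 0" using ms by simp
    with E[OF ms(1), of j] j show False by simp
  qed
  show ?thesis using pos[OF mu] E[OF mu] by blast
qed



lemma simplex_compact: "compact {u::real^'n. (\<forall>i. 0 \<le> u$i) \<and> (\<Sum>i\<in>UNIV. u$i) = 1}"
proof (rule compact_eq_bounded_closed[THEN iffD2], rule conjI)
  show "bounded {u::real^'n. (\<forall>i. 0 \<le> u$i) \<and> (\<Sum>i\<in>UNIV. u$i) = 1}"
    unfolding bounded_iff
  proof (intro exI ballI)
    fix u :: "real^'n" assume "u \<in> {u. (\<forall>i. 0 \<le> u$i) \<and> (\<Sum>i\<in>UNIV. u$i) = 1}"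
    then have "(\<Sum>i\<in>UNIV. \<bar>u$i\<bar>) = 1" by simp
    then show "norm u \<le> 1" using norm_le_l1_cart[of u] by simp
  qed
  show "closed {u::real^'n. (\<forall>i. 0 \<le> u$i) \<and> (\<Sum>i\<in>UNIV. u$i) = 1}"
    by (intro closed_Collect_conj closed_Collect_all closed_Collect_le closed_Collect_eq continuous_intros)
qed

lemma perron_like:
  fixes M :: "real^'n^'n"
  assumes s: "spectral_abscissa M \<le> 0" and metz: "\<And>i j. i \<noteq> j \<Longrightarrow> M$i$j \<ge> 0"
  shows "\<exists>u::real^'n. (\<forall>i. u$i \<ge> 0) \<and> (\<Sum>i\<in>UNIV. u$i) = 1 \<and> (\<forall>k. (\<Sum>i\<in>UNIV. M$i$k * u$i) \<le> 0)"
proof -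
  define S where "S = {u::real^'n. (\<forall>i. 0 \<le> u$i) \<and> (\<Sum>i\<in>UNIV. u$i) = 1}"
  have ex: "\<exists>u. u \<in> S \<and> (\<forall>k. (\<Sum>i\<in>UNIV. M$i$k * u$i) \<le> inverse (real (Suc n)))" for n
  proof -
    define \<mu> where "\<mu> = real (Suc n)"
    have mu: "\<mu> > 0" unfolding \<mu>_def by simp
    obtain w :: "real^'n" where wp: "\<forall>k. w$k > 0" and we: "\<forall>k. w$k - \<mu> * (\<Sum>i\<in>UNIV. M$i$k * w$i) = 1"
      using pos_w[OF s metz, of \<mu>] mu by auto
    define \<sigma> where "\<sigma> = (\<Sum>i\<in>UNIV. w$i)"
    have sp: "\<sigma> > 0" unfolding \<sigma>_def using wp by (simp add: sum_pos)
    define u where "u = (1/\<sigma>) *\<^sub>R w"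
    have uS: "u \<in> S" unfolding S_def u_def using wp sp
      by (auto simp: \<sigma>_def sum_divide_distrib[symmetric] less_imp_le)
    have "(\<Sum>i\<in>UNIV. M$i$k * u$i) \<le> inverse \<mu>" for k
    proof -
      have "\<mu> * (\<Sum>i\<in>UNIV. M$i$k * w$i) \<le> w$k" using we[rule_format, of k] by linarith
      then have "(\<Sum>i\<in>UNIV. M$i$k * w$i) \<le> w$k / \<mu>" using mu by (simp add: field_simps)
      then have "(\<Sum>i\<in>UNIV. M$i$k * w$i) / \<sigma> \<le> w$k / \<mu> / \<sigma>" using sp by (intro divide_right_mono) auto
      moreover have "(\<Sum>i\<in>UNIV. M$i$k * u$i) = (\<Sum>i\<in>UNIV. M$i$k * w$i) / \<sigma>"
        unfolding u_def by (simp add: sum_divide_distrib)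
      moreover have "w$k \<le> \<sigma>" unfolding \<sigma>_def using wp by (intro member_le_sum) (auto simp: less_imp_le)
      then have "w$k / \<mu> / \<sigma> \<le> inverse \<mu>" using sp mu wp
        by (simp add: field_simps)
      ultimately show ?thesis by simp
    qed
    then show ?thesis using uS unfolding \<mu>_def by blast
  qed
  then obtain u where u: "\<And>n. u n \<in> S" "\<And>n k. (\<Sum>i\<in>UNIV. M$i$k * u n $i) \<le> inverse (real (Suc n))"
    by metis
  have "seq_compact S" unfolding S_def by (rule compact_imp_seq_compact[OF simplex_compact])
  then obtain l r where l: "l \<in> S" "strict_mono r" "(u \<circ> r) \<longlonglongrightarrow> l"
    using seq_compactE[of S u] u(1) by blast
  have "(\<Sum>i\<in>UNIV. M$i$k * l$i) \<le> 0" for k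
  proof (rule LIMSEQ_le)
    show "(\<lambda>n. (\<Sum>i\<in>UNIV. M$i$k * (u \<circ> r) n $i)) \<longlonglongrightarrow> (\<Sum>i\<in>UNIV. M$i$k * l$i)"
      by (intro tendsto_intros l(3))
    show "(\<lambda>n. inverse (real (Suc n))) \<longlonglongrightarrow> 0" by (rule LIMSEQ_inverse_real_of_nat)
    show "\<exists>N. \<forall>n\<ge>N. (\<Sum>i\<in>UNIV. M$i$k * (u \<circ> r) n $i) \<le> inverse (real (Suc n))"
    proof (intro exI allI impI)
      fix n
      have "n \<le> r n" using seq_suble[OF l(2)] by simp
      then have iv: "inverse (real (Suc (r n))) \<le> inverse (real (Suc n))" by (simp add: le_imp_inverse_le)
      show "(\<Sum>i\<in>UNIV. M$i$k * (u \<circ> r) n $i) \<le> inverse (real (Suc n))"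
        using order_trans[OF u(2)[of k "r n"] iv] by simp
    qed
  qed
  then show ?thesis using l(1) unfolding S_def by blast
qed



lemma pos_vec:
  fixes d :: "real^'n" and B :: "real^'n^'n"
  assumes B_nonneg: "\<forall>i j. B $ i $ j \<ge> 0"
    and B_irred: "irreducible_mat B"
    and s_le: "spectral_abscissa (- diag_mat d + B) \<le> 0"
  shows "\<exists>v::real^'n. (\<forall>i. v$i > 0) \<and> (\<forall>k. (\<Sum>i\<in>UNIV. B$i$k * v$i) \<le> d$k * v$k)"
proof -
  define M where "M = - diag_mat d + B"
  have Mij: "M$i$j = B$i$j - (if i = j then d$i else 0)" for i j
    unfolding M_def diag_mat_def by simp
  have metz: "M$i$j \<ge> 0" if "i \<noteq> j" for i j using that B_nonneg Mij by simp
  obtain u :: "real^'n" where u0: "\<forall>i. u$i \<ge> 0" and u1: "(\<Sum>i\<in>UNIV. u$i) = 1"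
    and uM: "\<forall>k. (\<Sum>i\<in>UNIV. M$i$k * u$i) \<le> 0"
    using perron_like[OF s_le[folded M_def] metz] by blast
  have key: "(\<Sum>i\<in>UNIV. B$i$k * u$i) \<le> d$k * u$k" for k
  proof -
    have "(\<Sum>i\<in>UNIV. M$i$k * u$i) = (\<Sum>i\<in>UNIV. B$i$k * u$i) - d$k * u$k"
      by (simp add: Mij left_diff_distrib sum_subtractf if_distrib[of "\<lambda>z. z * _"] sum.If_cases)
    then show ?thesis using uM[rule_format, of k] by linarith
  qed
  have zprop: "u$a = 0" if "(a, b) \<in> {(i, j). B $ i $ j \<noteq> 0}\<^sup>+" "u$b = 0" for a b
    using that(1,2)
  proof (induction rule: converse_trancl_induct)
    case (base y)
    have step: "u$i = 0" if "B$i$b \<noteq> 0" for i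
    proof -
      have "(\<Sum>i\<in>UNIV. B$i$b * u$i) \<le> 0" using key[of b] base by simp
      moreover have "\<forall>i\<in>UNIV. B$i$b * u$i \<ge> 0" using B_nonneg u0 by simp
      ultimately have "\<forall>i\<in>UNIV. B$i$b * u$i = 0"
        using sum_nonneg_eq_0_iff[of UNIV "\<lambda>i. B$i$b * u$i"] by (simp add: order_antisym sum_nonneg)
      then show ?thesis using that by auto
    qed
    then show ?case using base by simp
  next
    case (step y z)
    have "u$z = 0" using step by simp
    have st: "u$i = 0" if "B$i$z \<noteq> 0" for i
    proof -
      have "(\<Sum>i\<in>UNIV. B$i$z * u$i) \<le> 0" using key[of z] \<open>u$z = 0\<close> by simp
      moreover have "\<forall>i\<in>UNIV. B$i$z * u$i \<ge> 0" using B_nonneg u0 by simp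
      ultimately have "\<forall>i\<in>UNIV. B$i$z * u$i = 0"
        using sum_nonneg_eq_0_iff[of UNIV "\<lambda>i. B$i$z * u$i"] by (simp add: order_antisym sum_nonneg)
      then show ?thesis using that by auto
    qed
    then show ?case using step by simp
  qed
  have "u$i > 0" for i
  proof (rule ccontr)
    assume "\<not> u$i > 0"
    then have "u$i = 0" using u0 by (simp add: order_antisym not_less)
    then have "u$j = 0" for j using zprop[of j i] B_irred unfolding irreducible_mat_def by blast
    then show False using u1 by simp
  qed
  then show ?thesis using key by blast
qed



lemma mvt_bound:
  fixes g g' :: "real \<Rightarrow> real"
  assumes st: "s \<le> t" and s0: "0 \<le> s"
    and der: "\<And>\<tau>. \<tau> \<ge> 0 \<Longrightarrow> (g has_real_derivative g' \<tau>) (at \<tau> within {0..})"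
    and bnd: "\<And>\<tau>. s < \<tau> \<Longrightarrow> \<tau> < t \<Longrightarrow> g' \<tau> \<le> c"
  shows "g t - g s \<le> c * (t - s)"
proof (cases "s = t")
  case True then show ?thesis by simp
next
  case False then have lt: "s < t" using st by simp
  have "(g has_derivative (\<lambda>h. g' \<tau> * h)) (at \<tau> within {s..t})" if "s \<le> \<tau>" "\<tau> \<le> t" for \<tau>
  proof -
    have "(g has_real_derivative g' \<tau>) (at \<tau> within {s..t})"
      using der[of \<tau>] that s0 by (rule_tac DERIV_subset) auto
    then show ?thesis by (simp add: has_field_derivative_def)
  qed
  then obtain \<xi> where \<xi>: "\<xi> \<in> {s<..<t}" "g t - g s = g' \<xi> * (t - s)"
    using mvt_simple[OF lt, of g "\<lambda>\<tau> h. g' \<tau> * h"] by auto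
  then show ?thesis using bnd[of \<xi>] lt by (simp add: mult_right_mono)
qed

lemma mvt_lbound:
  fixes g g' :: "real \<Rightarrow> real"
  assumes st: "s \<le> t" and s0: "0 \<le> s"
    and der: "\<And>\<tau>. \<tau> \<ge> 0 \<Longrightarrow> (g has_real_derivative g' \<tau>) (at \<tau> within {0..})"
    and bnd: "\<And>\<tau>. s < \<tau> \<Longrightarrow> \<tau> < t \<Longrightarrow> g' \<tau> \<ge> c"
  shows "g t - g s \<ge> c * (t - s)"
proof -
  have "(- g t) - (- g s) \<le> (- c) * (t - s)"
    using mvt_bound[OF st s0, of "\<lambda>t. - g t" "\<lambda>t. - g' t" "- c"] der bnd
    by (auto intro: DERIV_minus)
  then show ?thesis by (simp add: algebra_simps)
qed

lemma Vdot:
  fixes d v :: "real^'n" and B :: "real^'n^'n" and h :: "'n \<Rightarrow> real \<Rightarrow> real"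
  assumes vB: "\<forall>k. (\<Sum>i\<in>UNIV. B$i$k * v$i) \<le> d$k * v$k"
    and vpos: "\<forall>i. v$i > 0"
    and h_nonneg: "\<forall>i. \<forall>y\<in>{0..1}. h i y \<ge> 0"
    and y: "y \<in> Xi"
  shows "(\<Sum>i\<in>UNIV. v$i * sis_field d h B y $ i) \<le> - (\<Sum>i\<in>UNIV. v$i * (y$i * (\<Sum>j\<in>UNIV. B$i$j * y$j)))"
proof -
  have y01: "0 \<le> y$i" "y$i \<le> 1" for i using y by (auto simp: Xi_def)
  have hn: "h i (y$i) \<ge> 0" for i using h_nonneg y01[of i] by auto
  have eq: "(\<Sum>i\<in>UNIV. v$i * sis_field d h B y $ i) =
      (\<Sum>i\<in>UNIV. v$i * (\<Sum>j\<in>UNIV. B$i$j * y$j)) - (\<Sum>i\<in>UNIV. v$i * d$i * y$i)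
      - (\<Sum>i\<in>UNIV. v$i * h i (y$i) * y$i) - (\<Sum>i\<in>UNIV. v$i * (y$i * (\<Sum>j\<in>UNIV. B$i$j * y$j)))"
  proof -
    have "v$i * sis_field d h B y $ i = v$i * (\<Sum>j\<in>UNIV. B$i$j * y$j) - v$i * d$i * y$i
      - v$i * h i (y$i) * y$i - v$i * (y$i * (\<Sum>j\<in>UNIV. B$i$j * y$j))" for i
    proof -
      have r: "\<And>a b c w z::real. w * (-(a+b)*c + (1-c)*z) = w*z - w*a*c - w*b*c - w*(c*z)" by algebra
      show ?thesis unfolding sis_field_def vec_lambda_beta by (rule r)
    qed
    then show ?thesis by (simp only: sum_subtractf)
  qed
  have "(\<Sum>i\<in>UNIV. v$i * (\<Sum>j\<in>UNIV. B$i$j * y$j)) = (\<Sum>j\<in>UNIV. y$j * (\<Sum>i\<in>UNIV. B$i$j * v$i))"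
  proof -
    have "(\<Sum>i\<in>UNIV. v$i * (\<Sum>j\<in>UNIV. B$i$j * y$j)) = (\<Sum>i\<in>UNIV. \<Sum>j\<in>UNIV. y$j * (B$i$j * v$i))"
      by (simp add: sum_distrib_left mult_ac)
    also have "\<dots> = (\<Sum>j\<in>UNIV. \<Sum>i\<in>UNIV. y$j * (B$i$j * v$i))" by (rule sum.swap)
    also have "\<dots> = (\<Sum>j\<in>UNIV. y$j * (\<Sum>i\<in>UNIV. B$i$j * v$i))" by (simp add: sum_distrib_left)
    finally show ?thesis .
  qed
  also have "\<dots> \<le> (\<Sum>j\<in>UNIV. y$j * (d$j * v$j))"
    by (rule sum_mono) (simp add: mult_left_mono vB y01)
  finally have a: "(\<Sum>i\<in>UNIV. v$i * (\<Sum>j\<in>UNIV. B$i$j * y$j)) \<le> (\<Sum>i\<in>UNIV. v$i * d$i * y$i)"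
    by (simp add: mult_ac)
  have b: "(\<Sum>i\<in>UNIV. v$i * h i (y$i) * y$i) \<ge> 0"
    by (rule sum_nonneg) (simp add: hn y01 vpos less_imp_le)
  show ?thesis using eq a b by linarith
qed



lemma equil:
  fixes d v :: "real^'n" and B :: "real^'n^'n" and h :: "'n \<Rightarrow> real \<Rightarrow> real"
  assumes vB: "\<forall>k. (\<Sum>i\<in>UNIV. B$i$k * v$i) \<le> d$k * v$k"
    and vpos: "\<forall>i. v$i > 0" and d_pos: "\<forall>i. d $ i > 0"
    and B_nonneg: "\<forall>i j. B $ i $ j \<ge> 0"
    and h_nonneg: "\<forall>i. \<forall>y\<in>{0..1}. h i y \<ge> 0"
    and h_zero: "\<forall>i. h i 0 = 0"
  shows "{x \<in> Xi. sis_field d h B x = 0} = {0}"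
proof
  show "{0} \<subseteq> {x \<in> Xi. sis_field d h B x = 0}"
    by (auto simp: Xi_def sis_field_def vec_eq_iff)
  show "{x \<in> Xi. sis_field d h B x = 0} \<subseteq> {0}"
  proof
    fix y assume "y \<in> {x \<in> Xi. sis_field d h B x = 0}"
    then have y: "y \<in> Xi" and f0: "sis_field d h B y = 0" by auto
    have y01: "0 \<le> y$i" "y$i \<le> 1" for i using y by (auto simp: Xi_def)
    define z where "z i = (\<Sum>j\<in>UNIV. B$i$j * y$j)" for i
    have zn: "z i \<ge> 0" for i unfolding z_def using B_nonneg y01 by (auto intro: sum_nonneg)
    have tn: "\<forall>i\<in>UNIV. v$i * (y$i * z i) \<ge> 0" using vpos y01 zn by (simp add: less_imp_le)
    have "0 \<le> - (\<Sum>i\<in>UNIV. v$i * (y$i * z i))"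
      using Vdot[OF vB vpos h_nonneg y] f0 unfolding z_def by simp
    then have "(\<Sum>i\<in>UNIV. v$i * (y$i * z i)) = 0" using tn by (simp add: order_antisym sum_nonneg)
    then have "\<forall>i\<in>UNIV. v$i * (y$i * z i) = 0" using sum_nonneg_eq_0_iff[of UNIV "\<lambda>i. v$i * (y$i * z i)"] tn by simp
    then have p0: "y$i * z i = 0" for i using vpos by (metis UNIV_I mult_eq_0_iff less_irrefl)
    have "y$i = 0" for i
    proof -
      have "sis_field d h B y $ i = 0" using f0 by simp
      then have "(d$i + h i (y$i)) * y$i = (1 - y$i) * z i" unfolding sis_field_def z_def by (simp add: algebra_simps)
      then have "(d$i + h i (y$i)) * y$i * y$i = (1 - y$i) * z i * y$i" by simp
      then have "(d$i + h i (y$i)) * y$i * y$i = (1 - y$i) * (y$i * z i)" by (simp add: mult_ac)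
      then have "(d$i + h i (y$i)) * (y$i * y$i) = 0" using p0[of i] by (simp add: mult.assoc)
      moreover have "d$i + h i (y$i) > 0" using d_pos h_nonneg y01[of i]
        by (smt (verit, best) atLeastAtMost_iff)
      ultimately show ?thesis by simp
    qed
    then show "y \<in> {0}" by (simp add: vec_eq_iff)
  qed
qed



lemma conv:
  fixes d v :: "real^'n" and B :: "real^'n^'n" and h :: "'n \<Rightarrow> real \<Rightarrow> real"
    and x :: "real \<Rightarrow> real^'n"
  assumes vB: "\<forall>k. (\<Sum>i\<in>UNIV. B$i$k * v$i) \<le> d$k * v$k"
    and vpos: "\<forall>i. v$i > 0" and d_pos: "\<forall>i. d $ i > 0"
    and B_nonneg: "\<forall>i j. B $ i $ j \<ge> 0"
    and h_nonneg: "\<forall>i. \<forall>y\<in>{0..1}. h i y \<ge> 0"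
    and h_bounded: "\<forall>i. bounded (h i ` {0..1})"
    and x0: "\<forall>t\<ge>0. x t \<in> Xi"
    and xd: "\<forall>t\<ge>0. (x has_vector_derivative sis_field d h B (x t)) (at t within {0..})"
  shows "(x \<longlongrightarrow> 0) at_top"
proof -
  define f where "f = sis_field d h B"
  define z where "z y i = (\<Sum>j\<in>UNIV. B$i$j * y$j)" for y :: "real^'n" and i
  have fi: "f y $ i = - (d$i + h i (y$i)) * y$i + (1 - y$i) * z y i" for y i
    by (simp add: f_def z_def sis_field_def)
  have x01: "0 \<le> x t $ i" "x t $ i \<le> 1" if "t \<ge> 0" for t i
    using x0 that by (auto simp: Xi_def)
  have zn: "0 \<le> z (x t) i" if "t \<ge> 0" for t i
    unfolding z_def using B_nonneg x01[OF that] by (auto intro: sum_nonneg)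
  define \<beta> where "\<beta> i = (\<Sum>j\<in>UNIV. B$i$j)" for i
  have bn: "\<beta> i \<ge> 0" for i unfolding \<beta>_def using B_nonneg by (auto intro: sum_nonneg)
  have zb: "z (x t) i \<le> \<beta> i" if "t \<ge> 0" for t i
    unfolding z_def \<beta>_def using B_nonneg x01[OF that]
    by (intro sum_mono) (simp add: mult_left_le)
  have yder: "((\<lambda>t. x t $ i) has_real_derivative f (x t) $ i) (at t within {0..})" if "t \<ge> 0" for t i
    using bounded_linear.has_vector_derivative[OF bounded_linear_vec_nth xd[rule_format, OF that]]
    by (simp add: has_real_derivative_iff_has_vector_derivative f_def)
  have "\<forall>i. \<exists>a. \<forall>s\<in>{0..1}. h i s \<le> a"
  proof
    fix i
    obtain a where "\<forall>y\<in>h i ` {0..1}. \<bar>y\<bar> \<le> a" using h_bounded unfolding bounded_real by blast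
    then show "\<exists>a. \<forall>s\<in>{0..1}. h i s \<le> a" by (metis abs_le_D1 imageI)
  qed
  then obtain H where H: "\<And>i s. s \<in> {0..1} \<Longrightarrow> h i s \<le> H i" by metis
  have Hn: "H i \<ge> 0" for i
  proof -
    have z01: "(0::real) \<in> {0..1}" by simp
    show ?thesis using H[OF z01, of i] h_nonneg z01 by (meson order_trans)
  qed
  define K where "K = (\<Sum>i\<in>UNIV. d$i + H i + \<beta> i)"
  have fb: "\<bar>f (x t) $ i\<bar> \<le> K" if "t \<ge> 0" for t i
  proof -
    let ?y = "x t $ i" and ?z = "z (x t) i"
    have y: "0 \<le> ?y" "?y \<le> 1" using x01[OF that] by auto
    have h0: "0 \<le> h i ?y" "h i ?y \<le> H i" using h_nonneg H y by auto
    have a1: "0 \<le> (d$i + h i ?y) * ?y" using h0 y d_pos by (simp add: less_imp_le)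
    have a2: "(d$i + h i ?y) * ?y \<le> d$i + H i"
    proof -
      have "(d$i + h i ?y) * ?y \<le> (d$i + h i ?y) * 1" using y h0 d_pos by (intro mult_left_mono) (auto simp: less_imp_le add_nonneg_nonneg)
      then show ?thesis using h0 by simp
    qed
    have b1: "0 \<le> (1 - ?y) * ?z" using y zn[OF that] by simp
    have b2: "(1 - ?y) * ?z \<le> \<beta> i"
    proof -
      have "(1 - ?y) * ?z \<le> 1 * ?z" using y zn[OF that] by (intro mult_right_mono) auto
      then show ?thesis using zb[OF that, of i] by simp
    qed
    have fe: "f (x t) $ i = - ((d$i + h i ?y) * ?y) + (1 - ?y) * ?z" using fi[of "x t" i] by (simp add: algebra_simps)
    have "\<bar>f (x t) $ i\<bar> \<le> d$i + H i + \<beta> i" unfolding fe abs_le_iff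
      using a1 a2 b1 b2 Hn[of i] bn[of i] d_pos[rule_format, of i] by linarith
    also have "\<dots> \<le> K" unfolding K_def
      by (rule member_le_sum) (auto simp: Hn bn d_pos less_imp_le add_nonneg_nonneg)
    finally show ?thesis .
  qed
  have Kn: "K \<ge> 0" using fb[of 0 undefined] by simp
  define V where "V t = (\<Sum>i\<in>UNIV. v$i * x t $ i)" for t
  define P where "P i t = x t $ i * z (x t) i" for i t
  have Pnn: "P i t \<ge> 0" if "t \<ge> 0" for i t unfolding P_def using x01[OF that] zn[OF that] by simp
  have Vder: "(V has_real_derivative (\<Sum>i\<in>UNIV. v$i * f (x t) $ i)) (at t within {0..})" if "t \<ge> 0" for t
    unfolding V_def by (intro DERIV_sum DERIV_cmult yder[OF that])
  have Vd_le: "(\<Sum>i\<in>UNIV. v$i * f (x t) $ i) \<le> - (v$i * P i t)" if "t \<ge> 0" for t i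
  proof -
    have "(\<Sum>i\<in>UNIV. v$i * f (x t) $ i) \<le> - (\<Sum>i\<in>UNIV. v$i * P i t)"
      using Vdot[OF vB vpos h_nonneg x0[rule_format, OF that]] by (simp add: f_def P_def z_def)
    moreover have "v$i * P i t \<le> (\<Sum>i\<in>UNIV. v$i * P i t)"
      by (rule member_le_sum) (auto simp: Pnn[OF that] vpos less_imp_le)
    ultimately show ?thesis by linarith
  qed
  have Vd0: "(\<Sum>i\<in>UNIV. v$i * f (x t) $ i) \<le> 0" if "t \<ge> 0" for t
    using Vd_le[OF that, of undefined] Pnn[OF that, of undefined] vpos
    by (smt (verit) mult_nonneg_nonneg)
  have Vdec: "V t \<le> V s" if "0 \<le> s" "s \<le> t" for s t
    using mvt_bound[OF that(2) that(1), of V "\<lambda>t. \<Sum>i\<in>UNIV. v$i * f (x t) $ i" 0] Vder Vd0 that by auto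
  have Vnn: "V t \<ge> 0" if "t \<ge> 0" for t
    unfolding V_def using x01[OF that] vpos by (auto intro!: sum_nonneg simp: less_imp_le)
  have cauchy: "\<exists>T\<ge>0. \<forall>s t. T \<le> s \<longrightarrow> s \<le> t \<longrightarrow> V s - V t < \<gamma>" if "\<gamma> > 0" for \<gamma>
  proof -
    define L where "L = Inf (V ` {0..})"
    have bdd: "bdd_below (V ` {0..})" using Vnn by (auto intro!: bdd_belowI[of _ 0])
    have Lle: "L \<le> V t" if "t \<ge> 0" for t unfolding L_def using bdd that by (auto intro!: cInf_lower)
    have "\<exists>T\<in>{0..}. V T < L + \<gamma>"
      using cInf_less_iff[of "V ` {0..}" "L + \<gamma>"] bdd \<open>\<gamma> > 0\<close> unfolding L_def by auto
    then obtain T where T: "T \<ge> 0" "V T < L + \<gamma>" by auto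
    show ?thesis
    proof (intro exI[of _ T] conjI allI impI)
      fix s t assume "T \<le> s" "s \<le> t"
      then have "V s \<le> V T" "L \<le> V t" using Vdec Lle T by auto
      then show "V s - V t < \<gamma>" using T by linarith
    qed (simp add: T)
  qed
  have Pder: "(P i has_real_derivative (f (x t) $ i * z (x t) i + x t $ i * (\<Sum>j\<in>UNIV. B$i$j * f (x t) $ j))) (at t within {0..})"
    if "t \<ge> 0" for t i
  proof -
    have zd: "((\<lambda>t. z (x t) i) has_real_derivative (\<Sum>j\<in>UNIV. B$i$j * f (x t) $ j)) (at t within {0..})"
      unfolding z_def by (intro DERIV_sum DERIV_cmult yder[OF that])
    have "P i = (\<lambda>t. x t $ i * z (x t) i)" unfolding P_def by auto
    then show ?thesis using DERIV_mult[OF yder[OF that] zd] by (simp add: mult.commute)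
  qed
  have Pd_bound: "f (x t) $ i * z (x t) i + x t $ i * (\<Sum>j\<in>UNIV. B$i$j * f (x t) $ j) \<ge> - (2 * K * \<beta> i)"
    if "t \<ge> 0" for t i
  proof -
    have a: "\<bar>f (x t) $ i * z (x t) i\<bar> \<le> K * \<beta> i"
      unfolding abs_mult using fb[OF that] zn[OF that] zb[OF that] Kn
      by (intro mult_mono) auto
    have "\<bar>\<Sum>j\<in>UNIV. B$i$j * f (x t) $ j\<bar> \<le> (\<Sum>j\<in>UNIV. B$i$j * K)"
      by (rule order_trans[OF sum_abs sum_mono]) (simp add: abs_mult B_nonneg fb[OF that] mult_left_mono)
    also have "\<dots> = K * \<beta> i" unfolding \<beta>_def by (simp add: sum_distrib_left mult.commute)
    finally have b0: "\<bar>\<Sum>j\<in>UNIV. B$i$j * f (x t) $ j\<bar> \<le> K * \<beta> i" .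
    have b: "\<bar>x t $ i * (\<Sum>j\<in>UNIV. B$i$j * f (x t) $ j)\<bar> \<le> K * \<beta> i"
    proof -
      have "\<bar>x t $ i * (\<Sum>j\<in>UNIV. B$i$j * f (x t) $ j)\<bar> \<le> 1 * (K * \<beta> i)"
        unfolding abs_mult using x01[OF that, of i] b0 by (intro mult_mono) auto
      then show ?thesis by simp
    qed
    show ?thesis using a b by (simp add: abs_le_iff)
  qed
  have Plip: "P i t - P i s \<ge> - (2 * K * \<beta> i) * (t - s)" if "0 \<le> s" "s \<le> t" for i s t
  proof -
    have "- (2 * K * \<beta> i) * (t - s) \<le> P i t - P i s"
      by (rule mvt_lbound[OF that(2,1), where g'="\<lambda>t. f (x t) $ i * z (x t) i + x t $ i * (\<Sum>j\<in>UNIV. B$i$j * f (x t) $ j)"])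
        (use Pder Pd_bound that in auto)
    then show ?thesis by simp
  qed
  have barb: "\<exists>T\<ge>0. \<forall>t\<ge>T. P i t < \<epsilon>" if "\<epsilon> > 0" for i \<epsilon>
  proof -
    define Lc where "Lc = 2 * K * \<beta> i + 1"
    have Lc: "Lc > 0" unfolding Lc_def using mult_nonneg_nonneg[OF Kn bn[of i]] by simp
    define \<eta> where "\<eta> = \<epsilon> / (2 * Lc)"
    have \<eta>: "\<eta> > 0" unfolding \<eta>_def using Lc that by simp
    have g: "v$i * \<epsilon> * \<eta> / 2 > 0" using vpos that \<eta> by simp
    obtain T where T: "T \<ge> 0" "\<forall>s t. T \<le> s \<longrightarrow> s \<le> t \<longrightarrow> V s - V t < v$i * \<epsilon> * \<eta> / 2"
      using cauchy[OF g] by auto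
    show ?thesis
    proof (intro exI[of _ T] conjI allI impI)
      fix t assume t: "T \<le> t"
      show "P i t < \<epsilon>"
      proof (rule ccontr)
        assume "\<not> P i t < \<epsilon>" then have Pt: "P i t \<ge> \<epsilon>" by simp
        have low: "P i \<tau> \<ge> \<epsilon>/2" if "t \<le> \<tau>" "\<tau> \<le> t + \<eta>" for \<tau>
        proof -
          have "P i \<tau> - P i t \<ge> - ((2*K*\<beta> i) * (\<tau> - t))" using Plip[of t \<tau> i] that t T by auto
          moreover have "(2*K*\<beta> i) * (\<tau> - t) \<le> Lc * \<eta>"
            unfolding Lc_def using that Kn bn[of i] by (intro mult_mono) auto
          moreover have "Lc * \<eta> = \<epsilon>/2" unfolding \<eta>_def using Lc by simp
          ultimately show ?thesis using Pt by linarith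
        qed
        have "V (t+\<eta>) - V t \<le> (- (v$i * (\<epsilon>/2))) * ((t+\<eta>) - t)"
        proof (rule mvt_bound[where g'="\<lambda>t. \<Sum>i\<in>UNIV. v$i * f (x t) $ i"])
          show "t \<le> t+\<eta>" using \<eta> by simp
          show "0 \<le> t" using t T by simp
          show "\<And>\<tau>. \<tau>\<ge>0 \<Longrightarrow> (V has_real_derivative (\<Sum>i\<in>UNIV. v$i * f (x \<tau>) $ i)) (at \<tau> within {0..})"
            by (rule Vder)
          fix \<tau> assume \<tau>: "t < \<tau>" "\<tau> < t + \<eta>"
          then have "P i \<tau> \<ge> \<epsilon>/2" using low by simp
          then have "v$i * P i \<tau> \<ge> v$i * (\<epsilon>/2)" using vpos by (simp add: mult_left_mono less_imp_le)
          then show "(\<Sum>i\<in>UNIV. v$i * f (x \<tau>) $ i) \<le> - (v$i * (\<epsilon>/2))"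
            using Vd_le[of \<tau> i] \<tau> t T by simp
        qed
        then have "V t - V (t+\<eta>) \<ge> v$i * \<epsilon> * \<eta> / 2" by (simp add: algebra_simps)
        moreover have "V t - V (t+\<eta>) < v$i * \<epsilon> * \<eta> / 2" using T(2) t \<eta> by auto
        ultimately show False by simp
      qed
    qed (simp add: T)
  qed
  have comp: "\<exists>T. \<forall>t\<ge>T. x t $ i < e" if "e > 0" for i e
  proof -
    define c where "c = e/2"
    define \<delta> where "\<delta> = d$i * c^2 / 2"
    define \<kappa> where "\<kappa> = d$i * c / 2"
    have c: "c > 0" unfolding c_def using that by simp
    have \<delta>: "\<delta> > 0" unfolding \<delta>_def using c d_pos by simp
    have \<kappa>: "\<kappa> > 0" unfolding \<kappa>_def using c d_pos by simp
    obtain T where T: "T \<ge> 0" "\<forall>t\<ge>T. P i t < \<delta>" using barb[OF \<delta>, of i] by auto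
    have fneg: "f (x t) $ i \<le> -\<kappa>" if "t \<ge> T" "x t $ i \<ge> c" for t
    proof -
      let ?y = "x t $ i" and ?z = "z (x t) i"
      have t0: "t \<ge> 0" using that T by simp
      have y: "0 \<le> ?y" "?y \<le> 1" using x01[OF t0] by auto
      have zz: "0 \<le> ?z" using zn[OF t0] by simp
      have "?y * ?z < \<delta>" using T(2) that(1) unfolding P_def by simp
      moreover have "c * ?z \<le> ?y * ?z" using that(2) zz by (simp add: mult_right_mono)
      ultimately have "c * ?z \<le> \<delta>" by simp
      then have zle: "?z \<le> \<delta> / c" using c by (simp add: field_simps)
      have hy: "0 \<le> h i ?y" using h_nonneg y by auto
      have "f (x t) $ i \<le> - d$i * ?y + ?z"
      proof -
        have "- (d$i + h i ?y) * ?y \<le> - d$i * ?y" using mult_nonneg_nonneg[OF hy y(1)] by (simp add: algebra_simps)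
        moreover have "(1 - ?y) * ?z \<le> ?z" using y zz by (simp add: mult_nonneg_nonneg algebra_simps)
        ultimately show ?thesis using fi[of "x t" i] by linarith
      qed
      also have "\<dots> \<le> - d$i * c + \<delta> / c"
      proof -
        have "d$i * c \<le> d$i * ?y" using that(2) d_pos[rule_format, of i] by (simp add: mult_left_mono)
        then show ?thesis using zle by linarith
      qed
      also have "\<dots> = -\<kappa>" unfolding \<delta>_def \<kappa>_def using c by (simp add: field_simps power2_eq_square)
      finally show ?thesis .
    qed
    have stepA: "\<exists>t1\<ge>T. x t1 $ i \<le> c"
    proof (rule ccontr)
      assume "\<not> ?thesis"
      then have gt: "\<forall>t\<ge>T. x t $ i > c" by (meson not_le)
      define t where "t = T + 2/\<kappa>"
      have tT: "T \<le> t" unfolding t_def using \<kappa> by simp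
      have "x t $ i - x T $ i \<le> (-\<kappa>) * (t - T)"
      proof (rule mvt_bound[OF tT T(1), where g'="\<lambda>\<tau>. f (x \<tau>) $ i"])
        show "\<And>\<tau>. \<tau>\<ge>0 \<Longrightarrow> ((\<lambda>t. x t $ i) has_real_derivative f (x \<tau>) $ i) (at \<tau> within {0..})"
          by (rule yder)
        fix \<tau> assume "T < \<tau>" "\<tau> < t"
        then show "f (x \<tau>) $ i \<le> - \<kappa>" using fneg gt by (simp add: less_imp_le)
      qed
      moreover have "(-\<kappa>) * (t - T) = -2" unfolding t_def using \<kappa> by simp
      moreover have "x T $ i \<le> 1" "0 \<le> x t $ i" using x01 T tT by auto
      ultimately show False by linarith
    qed
    then obtain t1 where t1: "t1 \<ge> T" "x t1 $ i \<le> c" by auto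
    have stepB: "x t $ i \<le> c" if tt: "t \<ge> t1" for t
    proof (rule ccontr)
      assume "\<not> x t $ i \<le> c" then have gt: "x t $ i > c" by simp
      have cont: "continuous_on {t1..t} (\<lambda>\<tau>. x \<tau> $ i)"
      proof (rule DERIV_continuous_on)
        fix \<tau> assume "\<tau> \<in> {t1..t}"
        then have "\<tau> \<ge> 0" using t1 T by auto
        then show "((\<lambda>t. x t $ i) has_real_derivative f (x \<tau>) $ i) (at \<tau> within {t1..t})"
          using yder[of \<tau> i] t1 T by (rule_tac DERIV_subset) auto
      qed
      obtain ts where ts: "ts \<in> {t1..t}" "\<forall>\<tau>\<in>{t1..t}. x \<tau> $ i \<le> x ts $ i"
        using continuous_attains_sup[OF compact_Icc _ cont] tt by auto
      have "x ts $ i \<ge> x t $ i" using ts tt by auto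
      then have tsc: "x ts $ i > c" using gt by simp
      then have "ts \<noteq> t1" using t1 by auto
      then have tsg: "ts > t1" using ts by simp
      have "f (x ts) $ i \<le> -\<kappa>" using fneg[of ts] tsc ts t1 by auto
      then have neg: "f (x ts) $ i < 0" using \<kappa> by simp
      obtain r where r: "r > 0" "\<forall>hh>0. ts - hh \<in> {0..} \<longrightarrow> hh < r \<longrightarrow> x ts $ i < x (ts - hh) $ i"
        using has_real_derivative_neg_dec_left[OF yder[of ts i] neg] ts t1 T by auto
      define hh where "hh = min (r/2) ((ts - t1)/2)"
      have h1: "hh \<le> (ts - t1)/2" "hh \<le> r/2" unfolding hh_def by (rule min.cobounded2, rule min.cobounded1)
      have h2: "hh > 0" unfolding hh_def using r tsg by simp
      have h3: "ts - hh \<ge> t1"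
      proof -
        have "hh * 2 \<le> ts - t1" using h1(1) by simp
        then show ?thesis using h2 by simp
      qed
      have hh: "hh > 0" "hh < r" "ts - hh \<ge> t1" using h1 h2 h3 r by auto
      then have "x ts $ i < x (ts - hh) $ i" using r t1 T by auto
      moreover have "x (ts - hh) $ i \<le> x ts $ i" using ts hh by auto
      ultimately show False by simp
    qed
    have "\<forall>t\<ge>t1. x t $ i < e"
    proof (intro allI impI)
      fix t assume "t1 \<le> t"
      then have "x t $ i \<le> e/2" using stepB unfolding c_def by blast
      then show "x t $ i < e" using that by linarith
    qed
    then show ?thesis by blast
  qed
  show ?thesis
  proof (rule vec_tendstoI)
    fix i
    show "((\<lambda>t. x t $ i) \<longlongrightarrow> 0 $ i) at_top"
    proof (rule order_tendstoI)
      fix a :: real assume "a < 0 $ i"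
      then show "\<forall>\<^sub>F t in at_top. a < x t $ i"
        unfolding eventually_at_top_linorder using x01 by (intro exI[of _ 0]) (smt (verit) zero_index)
    next
      fix a :: real assume "0 $ i < a"
      then show "\<forall>\<^sub>F t in at_top. x t $ i < a"
        using comp[of a i] by (simp add: eventually_at_top_linorder)
    qed
  qed
qed


theorem theorem3:
  fixes d :: "real ^ 'n" and B :: "real ^ 'n ^ 'n" and h :: "'n \<Rightarrow> real \<Rightarrow> real"
  assumes n2: "CARD('n) \<ge> 2"
    and d_pos: "\<forall>i. d $ i > 0"
    and B_nonneg: "\<forall>i j. B $ i $ j \<ge> 0"
    and B_irred: "irreducible_mat B"
    and h_nonneg: "\<forall>i. \<forall>y\<in>{0..1}. h i y \<ge> 0"
    and h_bounded: "\<forall>i. bounded (h i ` {0..1})"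
    and h_smooth: "\<forall>i. smooth_on {0..1} (h i)"
    and h_mono: "\<forall>i. mono_on {0..1} (h i)"
    and h_zero: "\<forall>i. h i 0 = 0"
    and s_le: "spectral_abscissa (- diag_mat d + B) \<le> 0"
  shows "{x \<in> Xi. sis_field d h B x = 0} = {0}
    \<and> (\<forall>x :: real \<Rightarrow> real ^ 'n.
          x 0 \<in> Xi \<and> (\<forall>t\<ge>0. x t \<in> Xi) \<and>
          (\<forall>t\<ge>0. (x has_vector_derivative sis_field d h B (x t)) (at t within {0..}))
          \<longrightarrow> (x \<longlongrightarrow> 0) at_top)"
  proof -
  obtain v where vpos: "\<forall>i. v$i > 0" and vB: "\<forall>k. (\<Sum>i\<in>UNIV. B$i$k * v$i) \<le> d$k * v$k"
    using pos_vec[OF B_nonneg B_irred s_le] by blast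
  show ?thesis
  proof (intro conjI allI impI)
    show "{x \<in> Xi. sis_field d h B x = 0} = {0}"
      by (rule equil[OF vB vpos d_pos B_nonneg h_nonneg h_zero])
    fix x :: "real \<Rightarrow> real ^ 'n"
    assume a: "x 0 \<in> Xi \<and> (\<forall>t\<ge>0. x t \<in> Xi) \<and>
          (\<forall>t\<ge>0. (x has_vector_derivative sis_field d h B (x t)) (at t within {0..}))"
    show "(x \<longlongrightarrow> 0) at_top"
      using a by (intro conv[OF vB vpos d_pos B_nonneg h_nonneg h_bounded]) auto
  qed
qed

end
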